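(* Let $0<\beta<1$. Consider the problem: among all pairs $(p,u)$ with $p>0$ and $u\in W^{1,1}[-p,p]$ nonnegative, satisfying $u(p)=u(-p)=0$ and $\int_{-p}^p u\,dx=1$, minimize $$J[u]=\int_{-p}^p\Big[\sqrt{1+u'(x)^2}-\beta\Big]\,dx.$$ Then there exists a unique minimizer, it is smooth up to the boundary of $[-p,p]$, and it is given by $$u(x)=\sqrt{R^2-x^2}-\beta R,\qquad R^{-1}=\sqrt{\arccos\beta-\beta\sqrt{1-\beta^2}},\qquad p=\sqrt{1-\beta^2}\,R.$$ Furthermore, the graph of $u$ meets the $x$-axis at $\pm p$ with interior angle $\arccos\beta$, i.e. $\frac{1}{\sqrt{1+u'(\pm p)^2}}=\beta$.
   Context: $W^{1,1}[-p,p]$ denotes the Sobolev space of integrable functions on $[-p,p]$ with integrable weak derivative (absolutely continuous functions). The half-width $p>0$ is free (part of the minimization). *)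

theory Defs
  imports "HOL-Analysis.Analysis"
begin

text \<open>W^{1,1}[-p,p] in one dimension = absolutely continuous functions:
  u has weak derivative g, with g absolutely integrable on [-p,p] and
  u x = u(-p) + integral of g over [-p,x] for all x in [-p,p].\<close>
definition W11_with_deriv :: "real \<Rightarrow> (real \<Rightarrow> real) \<Rightarrow> (real \<Rightarrow> real) \<Rightarrow> bool" where
  "W11_with_deriv p u g \<longleftrightarrow>
     g absolutely_integrable_on {-p..p} \<and>
     (\<forall>x\<in>{-p..p}. u x = u (-p) + integral {-p..x} g)"

definition admissible :: "real \<Rightarrow> (real \<Rightarrow> real) \<Rightarrow> (real \<Rightarrow> real) \<Rightarrow> bool" where
  "admissible p u g \<longleftrightarrow>
     p > 0 \<and> W11_with_deriv p u g \<and>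
     (\<forall>x\<in>{-p..p}. u x \<ge> 0) \<and> u p = 0 \<and> u (-p) = 0 \<and>
     integral {-p..p} u = 1"

definition Jfun :: "real \<Rightarrow> real \<Rightarrow> (real \<Rightarrow> real) \<Rightarrow> real" where
  "Jfun \<beta> p g = integral {-p..p} (\<lambda>x. sqrt (1 + (g x)^2) - \<beta>)"

end

theory Submission
  imports Defs
begin

lemma sf_lebesgue: "sigma_finite_measure (lebesgue :: real measure)"
proof -
  have "sigma_finite_measure (lborel::real measure)" by (rule sigma_finite_lborel)
  then obtain A :: "real set set" where A: "countable A" "A \<subseteq> sets lborel" "\<Union>A = space lborel" "\<forall>a\<in>A. emeasure lborel a \<noteq> \<infinity>"
    unfolding sigma_finite_measure_def by blast
  show ?thesis unfolding sigma_finite_measure_def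
  proof (intro exI[of _ A] conjI)
    show "A \<subseteq> sets lebesgue" using A(2) by auto
    show "\<Union>A = space lebesgue" using A(3) by simp
    show "\<forall>a\<in>A. emeasure lebesgue a \<noteq> \<infinity>" using A(2,4) by (auto simp: emeasure_completion emeasure_lborel_Icc_eq)
  qed (use A in auto)
qed

interpretation leb2: pair_sigma_finite "lebesgue::real measure" "lebesgue::real measure"
  by (simp add: pair_sigma_finite_def sf_lebesgue)

lemma fst_leb2[measurable]: "(\<lambda>z::real\<times>real. fst z) \<in> borel_measurable (lebesgue \<Otimes>\<^sub>M lebesgue)"
  using measurable_compose[OF measurable_fst id_borel_measurable_lebesgue] by (simp add: id_def)
lemma snd_leb2[measurable]: "(\<lambda>z::real\<times>real. snd z) \<in> borel_measurable (lebesgue \<Otimes>\<^sub>M lebesgue)"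
  using measurable_compose[OF measurable_snd id_borel_measurable_lebesgue] by (simp add: id_def)

lemma id_leb[measurable]: "(\<lambda>x::real. x) \<in> borel_measurable lebesgue"
  using id_borel_measurable_lebesgue by (simp add: id_def)

lemma measure_leb_Icc: "c \<le> d \<Longrightarrow> measure lebesgue {c..d::real} = d - c"
  by (simp add: measure_completion)

lemma ibp_fubini:
  fixes g :: "real \<Rightarrow> real"
  assumes g: "g absolutely_integrable_on {a..b}" and ab: "a \<le> b"
  shows "(\<lambda>x. integral {a..x} g) absolutely_integrable_on {a..b}"
    "(\<lambda>t. (b - t) * g t) absolutely_integrable_on {a..b}"
    "integral {a..b} (\<lambda>x. integral {a..x} g) = integral {a..b} (\<lambda>t. (b - t) * g t)"
proof -
  define S where "S = {a..b}"
  define G where "G t = indicator S t * g t" for t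
  have Gi: "integrable lebesgue G"
    using g unfolding set_integrable_def G_def S_def by simp
  have Gm[measurable]: "G \<in> borel_measurable lebesgue"
    using Gi by (rule borel_measurable_integrable)
  have Gs[measurable]: "(\<lambda>z. G (snd z)) \<in> borel_measurable (lebesgue \<Otimes>\<^sub>M lebesgue)"
    by (rule measurable_compose[OF measurable_snd Gm])
  have Sm[measurable]: "S \<in> sets borel" unfolding S_def by simp
  define f where "f x t = indicator S x * (if t \<le> x then G t else 0)" for x t :: real
  have fm[measurable]: "case_prod f \<in> borel_measurable (lebesgue \<Otimes>\<^sub>M lebesgue)"
    unfolding f_def case_prod_beta by measurable
  have fb: "\<bar>f x t\<bar> \<le> \<bar>G t\<bar>" for x t by (auto simp: f_def indicator_def)
  have fxm: "f x \<in> borel_measurable lebesgue" for x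
    unfolding f_def by measurable
  have int_t: "integrable lebesgue (f x)" for x
    by (rule Bochner_Integration.integrable_bound[OF Gi fxm]) (use fb in auto)
  have fint: "integrable (lebesgue \<Otimes>\<^sub>M lebesgue) (case_prod f)"
  proof (rule leb2.Fubini_integrable[OF fm])
    show "AE x in lebesgue. integrable lebesgue (\<lambda>y. case_prod f (x, y))"
      using int_t by simp
    have Si: "integrable lebesgue (\<lambda>x. indicator S x * (\<integral>t. \<bar>G t\<bar> \<partial>lebesgue) :: real)"
      unfolding S_def by (intro integrable_mult_left integrable_real_indicator) (auto simp: emeasure_completion emeasure_lborel_Icc_eq)
    show "integrable lebesgue (\<lambda>x. \<integral>y. norm (case_prod f (x, y)) \<partial>lebesgue)"
    proof (rule Bochner_Integration.integrable_bound[OF Si])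
      show "(\<lambda>x. \<integral>y. norm (case_prod f (x, y)) \<partial>lebesgue) \<in> borel_measurable lebesgue"
        using fm by measurable
      show "AE x in lebesgue. norm (\<integral>y. norm (case_prod f (x, y)) \<partial>lebesgue) \<le> norm (indicator S x * (\<integral>t. \<bar>G t\<bar> \<partial>lebesgue) :: real)"
      proof (intro AE_I2)
        fix x
        show "norm (\<integral>y. norm (case_prod f (x, y)) \<partial>lebesgue) \<le> norm (indicator S x * (\<integral>t. \<bar>G t\<bar> \<partial>lebesgue) :: real)"
        proof (cases "x \<in> S")
          case True
          have "(\<integral>y. \<bar>f x y\<bar> \<partial>lebesgue) \<le> (\<integral>t. \<bar>G t\<bar> \<partial>lebesgue)"
            by (intro integral_mono) (use int_t Gi fb in auto)
          moreover have "0 \<le> (\<integral>y. \<bar>f x y\<bar> \<partial>lebesgue)" by simp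
          ultimately show ?thesis using True by simp
        next
          case False
          then show ?thesis by (simp add: f_def)
        qed
      qed
    qed
  qed
  have inner1: "(\<integral>t. f x t \<partial>lebesgue) = indicator S x * integral {a..x} g" for x
  proof (cases "x \<in> S")
    case True
    then have xS: "a \<le> x" "x \<le> b" by (auto simp: S_def)
    have "(\<lambda>t. f x t) = (\<lambda>t. indicator {a..x} t *\<^sub>R g t)"
      using xS by (auto simp: f_def G_def S_def indicator_def fun_eq_iff)
    then have "(\<integral>t. f x t \<partial>lebesgue) = (LINT t:{a..x}|lebesgue. g t)"
      by (simp add: set_lebesgue_integral_def)
    also have "\<dots> = integral {a..x} g"
      by (rule set_lebesgue_integral_eq_integral(2)[OF absolutely_integrable_on_subinterval[OF g]]) (use xS in auto)
    finally show ?thesis using True by simp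
  next
    case False
    then show ?thesis by (simp add: f_def)
  qed
  have inner2: "(\<integral>x. f x t \<partial>lebesgue) = indicator S t * ((b - t) * g t)" for t
  proof (cases "t \<in> S")
    case True
    then have tS: "a \<le> t" "t \<le> b" by (auto simp: S_def)
    have "(\<lambda>x. f x t) = (\<lambda>x. g t * indicator {t..b} x)"
      using tS True by (auto simp: f_def G_def S_def indicator_def fun_eq_iff)
    then have "(\<integral>x. f x t \<partial>lebesgue) = g t * measure lebesgue {t..b}"
      by simp
    also have "\<dots> = g t * (b - t)" using tS by (simp add: measure_completion)
    finally show ?thesis using True by simp
  next
    case False
    then have "G t = 0" by (simp add: G_def)
    then have "(\<lambda>x. f x t) = (\<lambda>x. 0)" by (auto simp: f_def fun_eq_iff)
    then show ?thesis using False by simp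
  qed
  have i1: "integrable lebesgue (\<lambda>x. indicator S x * integral {a..x} g)"
    using leb2.integrable_fst[OF fint] inner1 by simp
  have i2: "integrable lebesgue (\<lambda>t. indicator S t * ((b - t) * g t))"
    using leb2.integrable_snd[OF fint] inner2 by simp
  have A1: "(\<lambda>x. integral {a..x} g) absolutely_integrable_on S"
    using i1 unfolding set_integrable_def by simp
  have A2: "(\<lambda>t. (b - t) * g t) absolutely_integrable_on S"
    using i2 unfolding set_integrable_def by simp
  show "(\<lambda>x. integral {a..x} g) absolutely_integrable_on {a..b}" using A1 by (simp add: S_def)
  show "(\<lambda>t. (b - t) * g t) absolutely_integrable_on {a..b}" using A2 by (simp add: S_def)
  have "integral S (\<lambda>x. integral {a..x} g) = (LINT x:S|lebesgue. integral {a..x} g)"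
    using set_lebesgue_integral_eq_integral(2)[OF A1] by simp
  also have "\<dots> = (\<integral>x. (\<integral>t. f x t \<partial>lebesgue) \<partial>lebesgue)"
    by (simp add: set_lebesgue_integral_def inner1)
  also have "\<dots> = (\<integral>t. (\<integral>x. f x t \<partial>lebesgue) \<partial>lebesgue)"
    using leb2.Fubini_integral[OF fint] by simp
  also have "\<dots> = (LINT t:S|lebesgue. (b - t) * g t)"
    by (simp add: set_lebesgue_integral_def inner2)
  also have "\<dots> = integral S (\<lambda>t. (b - t) * g t)"
    using set_lebesgue_integral_eq_integral(2)[OF A2] by simp
  finally show "integral {a..b} (\<lambda>x. integral {a..x} g) = integral {a..b} (\<lambda>t. (b - t) * g t)"
    by (simp add: S_def)
qed


lemma sq_lt: fixes x R :: real assumes "\<bar>x\<bar> < R" shows "0 < R\<^sup>2 - x\<^sup>2"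
proof -
  have "\<bar>x\<bar>\<^sup>2 < R\<^sup>2" using assms by (intro power_strict_mono) auto
  then show ?thesis by simp
qed

lemma sqrt_int_deriv:
  fixes R x :: real
  assumes "0 < R" "\<bar>x\<bar> < R"
  shows "((\<lambda>x. (x * sqrt (R\<^sup>2 - x\<^sup>2) + R\<^sup>2 * arcsin (x / R)) / 2) has_real_derivative sqrt (R\<^sup>2 - x\<^sup>2)) (at x)"
proof -
  have pos: "0 < R\<^sup>2 - x\<^sup>2" using assms sq_lt by blast
  have q: "-1 < x / R" "x / R < 1" using assms by (auto simp: abs_less_iff field_simps)
  have s1: "sqrt (1 - (x / R)\<^sup>2) = sqrt (R\<^sup>2 - x\<^sup>2) / R"
  proof -
    have "1 - (x / R)\<^sup>2 = (R\<^sup>2 - x\<^sup>2) / R\<^sup>2" using assms by (simp add: field_simps power2_eq_square)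
    then show ?thesis using assms by (simp add: real_sqrt_divide)
  qed
  define q where "q = sqrt (R\<^sup>2 - x\<^sup>2)"
  have sp: "q > 0" using pos by (simp add: q_def)
  have q2: "q * q = R\<^sup>2 - x\<^sup>2" using pos by (simp add: q_def flip: power2_eq_square)
  define h where "h = (\<lambda>x. sqrt (R\<^sup>2 - x\<^sup>2))"
  define k where "k = (\<lambda>x. arcsin (x / R))"
  have d1: "(h has_real_derivative (inverse (sqrt (R\<^sup>2 - x\<^sup>2)) / 2 * (- (2*x)))) (at x)"
  proof -
    have "((\<lambda>x. R\<^sup>2 - x\<^sup>2) has_real_derivative (- (2*x))) (at x)" by (auto intro!: derivative_eq_intros)
    from DERIV_chain2[OF DERIV_real_sqrt[OF pos] this] show ?thesis unfolding h_def .
  qed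
  have d2: "(k has_real_derivative (inverse (sqrt (1 - (x/R)\<^sup>2)) * (1 / R))) (at x)"
  proof -
    have "((\<lambda>x. x / R) has_real_derivative (1 / R)) (at x)" using assms(1) by (auto intro!: derivative_eq_intros)
    from DERIV_chain2[OF DERIV_arcsin[OF q] this] show ?thesis unfolding k_def .
  qed
  have "((\<lambda>x. (x * h x + R\<^sup>2 * k x) / 2) has_real_derivative
     ((1 * sqrt (R\<^sup>2 - x\<^sup>2) + x * (inverse (sqrt (R\<^sup>2 - x\<^sup>2)) / 2 * (- (2 * x))) + R\<^sup>2 * (inverse (sqrt (1 - (x/R)\<^sup>2)) * (1 / R))) / 2)) (at x)"
    apply (intro derivative_eq_intros)
    apply (rule d1 d2 | simp add: h_def)+
    done
  moreover have "((1 * sqrt (R\<^sup>2 - x\<^sup>2) + x * (inverse (sqrt (R\<^sup>2 - x\<^sup>2)) / 2 * (- (2 * x))) + R\<^sup>2 * (inverse (sqrt (1 - (x/R)\<^sup>2)) * (1 / R))) / 2) = sqrt (R\<^sup>2 - x\<^sup>2)"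
  proof -
    have "inverse (q / R) * (1 / R) = 1 / q" using sp assms(1) by (simp add: field_simps)
    then have "((1 * q + x * (inverse q / 2 * (- (2 * x))) + R\<^sup>2 * (inverse (q / R) * (1 / R))) / 2)
       = (q * q - x * x + R\<^sup>2) / (2 * q)" using sp by (simp add: field_simps)
    also have "\<dots> = (2 * (q * q)) / (2 * q)" using q2 by (simp add: power2_eq_square)
    also have "\<dots> = q" using sp by simp
    finally show ?thesis unfolding s1 q_def .
  qed
  ultimately have "((\<lambda>x. (x * h x + R\<^sup>2 * k x) / 2) has_real_derivative sqrt (R\<^sup>2 - x\<^sup>2)) (at x)"
    by (rule DERIV_cong)
  then show ?thesis unfolding h_def k_def .
qed


lemma sqrt_integral:
  fixes p R :: real
  assumes "0 < p" "p < R"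
  shows "((\<lambda>x. sqrt (R\<^sup>2 - x\<^sup>2)) has_integral (p * sqrt (R\<^sup>2 - p\<^sup>2) + R\<^sup>2 * arcsin (p / R))) {-p..p}"
proof -
  define F where "F x = (x * sqrt (R\<^sup>2 - x\<^sup>2) + R\<^sup>2 * arcsin (x / R)) / 2" for x
  have "((\<lambda>x. sqrt (R\<^sup>2 - x\<^sup>2)) has_integral (F p - F (-p))) {-p..p}"
  proof (rule fundamental_theorem_of_calculus)
    show "-p \<le> p" using assms by simp
    fix x assume x: "x \<in> {-p..p}"
    then have "\<bar>x\<bar> < R" using assms by auto
    from sqrt_int_deriv[OF _ this] assms have "(F has_real_derivative sqrt (R\<^sup>2 - x\<^sup>2)) (at x)"
      unfolding F_def by simp
    then show "(F has_vector_derivative sqrt (R\<^sup>2 - x\<^sup>2)) (at x within {-p..p})"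
      by (simp add: has_real_derivative_iff_has_vector_derivative has_vector_derivative_at_within)
  qed
  moreover have "F p - F (-p) = p * sqrt (R\<^sup>2 - p\<^sup>2) + R\<^sup>2 * arcsin (p / R)"
  proof -
    have "arcsin (- (p / R)) = - arcsin (p / R)" using assms by (intro arcsin_minus) (auto simp: field_simps)
    then show ?thesis by (simp add: F_def field_simps)
  qed
  ultimately show ?thesis by simp
qed

lemma cs_le:
  fixes a b g :: real
  assumes "a\<^sup>2 + b\<^sup>2 = 1"
  shows "a + b * g \<le> sqrt (1 + g\<^sup>2)"
proof (rule real_le_rsqrt)
  have "1 + g\<^sup>2 - (a + b * g)\<^sup>2 = (a * g - b)\<^sup>2"
  proof -
    have "1 + g\<^sup>2 - (a + b * g)\<^sup>2 = (a\<^sup>2 + b\<^sup>2) * (1 + g\<^sup>2) - (a + b * g)\<^sup>2" using assms by simp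
    also have "\<dots> = (a * g - b)\<^sup>2" by (simp add: power2_eq_square algebra_simps)
    finally show ?thesis .
  qed
  moreover have "0 \<le> (a * g - b)\<^sup>2" by simp
  ultimately show "(a + b * g)\<^sup>2 \<le> 1 + g\<^sup>2" by linarith
qed

lemma cs_eq:
  fixes a b g :: real
  assumes "a\<^sup>2 + b\<^sup>2 = 1" "a > 0" "a + b * g = sqrt (1 + g\<^sup>2)"
  shows "g = b / a"
proof -
  have "(a + b * g)\<^sup>2 = 1 + g\<^sup>2" proof -
    have "(sqrt (1 + g\<^sup>2))\<^sup>2 = 1 + g\<^sup>2" by (simp add: add_nonneg_nonneg)
    then show ?thesis using assms(3) by simp
  qed
  moreover have "1 + g\<^sup>2 - (a + b * g)\<^sup>2 = (a * g - b)\<^sup>2"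
  proof -
    have "1 + g\<^sup>2 - (a + b * g)\<^sup>2 = (a\<^sup>2 + b\<^sup>2) * (1 + g\<^sup>2) - (a + b * g)\<^sup>2" using assms by simp
    also have "\<dots> = (a * g - b)\<^sup>2" by (simp add: power2_eq_square algebra_simps)
    finally show ?thesis .
  qed
  ultimately have "a * g - b = 0" by simp
  then show ?thesis using assms(2) by (simp add: field_simps)
qed

lemma sqrt1g_int:
  fixes g :: "real \<Rightarrow> real"
  assumes g: "g absolutely_integrable_on {a..b}"
  shows "(\<lambda>x. sqrt (1 + (g x)\<^sup>2)) absolutely_integrable_on {a..b}"
proof (rule measurable_bounded_by_integrable_imp_absolutely_integrable)
  have gm: "g \<in> borel_measurable (lebesgue_on {a..b})"
    using g by (intro integrable_imp_measurable) (simp add: set_lebesgue_integral_eq_integral(1))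
  show "(\<lambda>x. sqrt (1 + (g x)\<^sup>2)) \<in> borel_measurable (lebesgue_on {a..b})"
    using gm by measurable
  show "{a..b} \<in> sets lebesgue" by simp
  show "(\<lambda>x. 1 + \<bar>g x\<bar>) integrable_on {a..b}"
    using g by (intro integrable_add integrable_const_ivl) (simp add: absolutely_integrable_on_def)
  fix x
  have "sqrt (1 + (g x)\<^sup>2) \<le> sqrt ((1 + \<bar>g x\<bar>)\<^sup>2)"
    by (intro real_sqrt_le_mono) (simp add: power2_eq_square algebra_simps)
  then show "norm (sqrt (1 + (g x)\<^sup>2)) \<le> 1 + \<bar>g x\<bar>" by simp
qed


lemma adm_ibp:
  assumes adm: "admissible p u g"
  shows "((\<lambda>x. x * g x) has_integral (-1)) {-p..p}"
proof -
  have p: "p > 0" and g: "g absolutely_integrable_on {-p..p}"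
    and ux0: "\<forall>x\<in>{-p..p}. u x = u (-p) + integral {-p..x} g"
    and um: "u (-p) = 0" and up: "u p = 0" and ui: "integral {-p..p} u = 1"
    using adm unfolding admissible_def W11_with_deriv_def by auto
  have ux: "u x = integral {-p..x} g" if "x \<in> {-p..p}" for x using ux0 um that by simp
  have "integral {-p..p} u = integral {-p..p} (\<lambda>x. integral {-p..x} g)"
    by (rule integral_cong) (simp add: ux)
  also have "\<dots> = integral {-p..p} (\<lambda>t. (p - t) * g t)"
    using ibp_fubini(3)[OF g] p by simp
  finally have i1: "integral {-p..p} (\<lambda>t. (p - t) * g t) = 1" using ui by simp
  have a2: "(\<lambda>t. (p - t) * g t) integrable_on {-p..p}"
    using ibp_fubini(2)[OF g] p set_lebesgue_integral_eq_integral(1) by auto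
  have h1: "((\<lambda>t. (p - t) * g t) has_integral 1) {-p..p}"
    using a2 i1 by (metis integrable_integral)
  have gi: "g integrable_on {-p..p}" using g set_lebesgue_integral_eq_integral(1) by auto
  have "integral {-p..p} g = 0" using ux[of p] up p by simp
  then have h2: "(g has_integral 0) {-p..p}" using gi by (metis integrable_integral)
  have "((\<lambda>t. p * g t - (p - t) * g t) has_integral (p * 0 - 1)) {-p..p}"
    by (intro has_integral_diff has_integral_mult_right h1 h2)
  moreover have "(\<lambda>t. p * g t - (p - t) * g t) = (\<lambda>x. x * g x)" by (auto simp: fun_eq_iff algebra_simps)
  ultimately show ?thesis by simp
qed

lemma key:
  fixes \<beta> p :: real and u g :: "real \<Rightarrow> real"
  assumes b: "0 < \<beta>" "\<beta> < 1" and adm: "admissible p u g"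
  defines "s \<equiv> sqrt (1 - \<beta>\<^sup>2)"
  defines "R \<equiv> p / s"
  defines "D \<equiv> \<lambda>x. sqrt (1 + (g x)\<^sup>2) - (sqrt (R\<^sup>2 - x\<^sup>2) - x * g x) / R"
  shows "D integrable_on {-p..p}" "\<forall>x\<in>{-p..p}. 0 \<le> D x"
    "Jfun \<beta> p g = 1 / R + (arccos \<beta> - \<beta> * s) * R + integral {-p..p} D"
proof -
  have p: "p > 0" and g: "g absolutely_integrable_on {-p..p}"
    using adm unfolding admissible_def W11_with_deriv_def by auto
  have b2: "\<beta>\<^sup>2 < 1" using b by (simp add: power_less_one_iff)
  have s0: "0 < s" using b2 by (simp add: s_def)
  have s1: "s < 1" using b by (simp add: s_def)
  have ss: "s\<^sup>2 = 1 - \<beta>\<^sup>2" using b2 by (simp add: s_def)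
  have R0: "R > 0" using p s0 by (simp add: R_def)
  have pR: "p = s * R" using s0 by (simp add: R_def)
  have Rp: "p < R" using pR s1 R0 by (simp add: mult_less_cancel_right1)
  have sqp: "sqrt (R\<^sup>2 - p\<^sup>2) = R * \<beta>"
  proof -
    have "R\<^sup>2 - p\<^sup>2 = R\<^sup>2 * (1 - s\<^sup>2)" unfolding pR by (simp add: power2_eq_square algebra_simps)
    also have "\<dots> = (R * \<beta>)\<^sup>2" using ss by (simp add: power_mult_distrib)
    finally have "R\<^sup>2 - p\<^sup>2 = (R * \<beta>)\<^sup>2" .
    then show ?thesis using R0 b by simp
  qed
  have asin: "arcsin (p / R) = arccos \<beta>"
    using b R0 pR by (simp add: arccos_arcsin_sqrt_pos s_def)
  define I where "I = p * sqrt (R\<^sup>2 - p\<^sup>2) + R\<^sup>2 * arcsin (p / R)"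
  have h2: "((\<lambda>x. sqrt (R\<^sup>2 - x\<^sup>2)) has_integral I) {-p..p}"
    unfolding I_def by (rule sqrt_integral[OF p Rp])
  have h3: "((\<lambda>x. x * g x) has_integral (-1)) {-p..p}" by (rule adm_ibp[OF adm])
  have a1: "(\<lambda>x. sqrt (1 + (g x)\<^sup>2)) integrable_on {-p..p}"
    using sqrt1g_int[OF g] set_lebesgue_integral_eq_integral(1) by auto
  define J1 where "J1 = integral {-p..p} (\<lambda>x. sqrt (1 + (g x)\<^sup>2))"
  have h1: "((\<lambda>x. sqrt (1 + (g x)\<^sup>2)) has_integral J1) {-p..p}"
    using a1 unfolding J1_def by (rule integrable_integral)
  have hD: "((\<lambda>x. sqrt (1 + (g x)\<^sup>2) - (1 / R) * sqrt (R\<^sup>2 - x\<^sup>2) + (1 / R) * (x * g x)) has_integral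
      (J1 - (1 / R) * I + (1 / R) * (-1))) {-p..p}"
    by (intro has_integral_add has_integral_diff has_integral_mult_right h1 h2 h3)
  have Deq: "D = (\<lambda>x. sqrt (1 + (g x)\<^sup>2) - (1 / R) * sqrt (R\<^sup>2 - x\<^sup>2) + (1 / R) * (x * g x))"
    unfolding D_def by (auto simp: fun_eq_iff diff_divide_distrib)
  have hD': "(D has_integral (J1 - I / R - 1 / R)) {-p..p}"
    using hD unfolding Deq by simp
  then show "D integrable_on {-p..p}" by blast
  show "\<forall>x\<in>{-p..p}. 0 \<le> D x"
  proof
    fix x assume x: "x \<in> {-p..p}"
    then have "\<bar>x\<bar> < R" using Rp by auto
    then have pos: "0 < R\<^sup>2 - x\<^sup>2" by (rule sq_lt)
    have "(sqrt (R\<^sup>2 - x\<^sup>2) / R)\<^sup>2 + (- x / R)\<^sup>2 = 1"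
      using pos R0 by (simp add: power_divide field_simps)
    from cs_le[OF this, of "g x"]
    have "sqrt (R\<^sup>2 - x\<^sup>2) / R + - x / R * g x \<le> sqrt (1 + (g x)\<^sup>2)" .
    moreover have "(sqrt (R\<^sup>2 - x\<^sup>2) - x * g x) / R = sqrt (R\<^sup>2 - x\<^sup>2) / R + - x / R * g x"
      by (simp add: diff_divide_distrib)
    ultimately show "0 \<le> D x" unfolding D_def by simp
  qed
  have hJ: "((\<lambda>x. sqrt (1 + (g x)\<^sup>2) - \<beta>) has_integral (J1 - Henstock_Kurzweil_Integration.content {-p..p} *\<^sub>R \<beta>)) {-p..p}"
    by (intro has_integral_diff h1 has_integral_const_real)
  have "Jfun \<beta> p g = J1 - 2 * p * \<beta>"
    unfolding Jfun_def using integral_unique[OF hJ] p by simp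
  moreover have "integral {-p..p} D = J1 - I / R - 1 / R" using integral_unique[OF hD'] .
  moreover have "I / R = p * \<beta> + R * arccos \<beta>"
    unfolding I_def sqp asin using R0 by (simp add: field_simps power2_eq_square)
  ultimately show "Jfun \<beta> p g = 1 / R + (arccos \<beta> - \<beta> * s) * R + integral {-p..p} D"
    using pR by (simp add: algebra_simps)
qed


lemma c_pos:
  fixes \<beta> :: real
  assumes "0 < \<beta>" "\<beta> < 1"
  shows "0 < arccos \<beta> - \<beta> * sqrt (1 - \<beta>\<^sup>2)"
proof -
  have a0: "0 < arccos \<beta>" using arccos_lt_bounded[of \<beta>] assms by auto
  have sa: "sin (arccos \<beta>) = sqrt (1 - \<beta>\<^sup>2)" using assms by (intro sin_arccos) auto
  have b2: "\<beta>\<^sup>2 < 1" using assms by (simp add: power_less_one_iff)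
  have s0: "0 < sqrt (1 - \<beta>\<^sup>2)" using b2 by simp
  have "\<beta> * sqrt (1 - \<beta>\<^sup>2) < sqrt (1 - \<beta>\<^sup>2)" using s0 assms by simp
  also have "\<dots> \<le> arccos \<beta>" using sin_x_le_x[of "arccos \<beta>"] a0 sa by simp
  finally show ?thesis by simp
qed

lemma amgm:
  fixes c R :: real
  assumes "0 < c" "0 < R"
  shows "2 * sqrt c \<le> 1 / R + c * R" and "1 / R + c * R = 2 * sqrt c \<Longrightarrow> R = 1 / sqrt c"
proof -
  define t where "t = sqrt c"
  have t0: "t > 0" using assms by (simp add: t_def)
  have ct: "c = t\<^sup>2" using assms by (simp add: t_def)
  have eq: "1 / R + c * R - 2 * sqrt c = (t * R - 1)\<^sup>2 / R"
    using assms(2) t0 unfolding ct t_def[symmetric] by (simp add: field_simps power2_eq_square)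
  have "0 \<le> (t * R - 1)\<^sup>2 / R" using assms by simp
  then show "2 * sqrt c \<le> 1 / R + c * R" using eq by linarith
  assume "1 / R + c * R = 2 * sqrt c"
  then have "(t * R - 1)\<^sup>2 / R = 0" using eq by linarith
  then have "t * R = 1" using assms(2) by simp
  then show "R = 1 / sqrt c" using t0 unfolding t_def[symmetric] by (simp add: field_simps)
qed

lemma ae_zero:
  fixes D :: "real \<Rightarrow> real"
  assumes "D integrable_on S" "\<And>x. x \<in> S \<Longrightarrow> 0 \<le> D x" "integral S D = 0"
  shows "\<exists>N. negligible N \<and> (\<forall>x\<in>S - N. D x = 0)"
proof -
  have ai: "D absolutely_integrable_on S" by (rule nonnegative_absolutely_integrable_1[OF assms(1,2)])
  then have int: "integrable lebesgue (\<lambda>x. indicator S x *\<^sub>R D x)" by (simp add: set_integrable_def)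
  have "(LINT x:S|lebesgue. D x) = 0" using set_lebesgue_integral_eq_integral(2)[OF ai] assms(3) by simp
  then have "integral\<^sup>L lebesgue (\<lambda>x. indicator S x *\<^sub>R D x) = 0" by (simp add: set_lebesgue_integral_def)
  moreover have "AE x in lebesgue. 0 \<le> indicator S x *\<^sub>R D x" using assms(2) by (auto simp: indicator_def)
  ultimately have "AE x in lebesgue. indicator S x *\<^sub>R D x = 0"
    using integral_nonneg_eq_0_iff_AE[OF int] by simp
  then obtain N where N: "negligible N" "{x. \<not> indicator S x *\<^sub>R D x = 0} \<subseteq> N"
    unfolding eventually_ae_filter_negligible by blast
  have "\<forall>x\<in>S - N. D x = 0"
  proof
    fix x assume "x \<in> S - N"
    then show "D x = 0" using N(2) by (auto simp: indicator_def)
  qed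
  then show ?thesis using N(1) by blast
qed

lemma u0_deriv:
  fixes R x :: real
  assumes "\<bar>x\<bar> < R"
  shows "((\<lambda>x. sqrt (R\<^sup>2 - x\<^sup>2) - c) has_real_derivative (- x / sqrt (R\<^sup>2 - x\<^sup>2))) (at x)"
proof -
  have pos: "0 < R\<^sup>2 - x\<^sup>2" using assms by (rule sq_lt)
  have "((\<lambda>x. R\<^sup>2 - x\<^sup>2) has_real_derivative (- (2*x))) (at x)" by (auto intro!: derivative_eq_intros)
  from DERIV_chain2[OF DERIV_real_sqrt[OF pos] this]
  have "((\<lambda>x. sqrt (R\<^sup>2 - x\<^sup>2)) has_real_derivative (inverse (sqrt (R\<^sup>2 - x\<^sup>2)) / 2 * (- (2*x)))) (at x)" .
  then have "((\<lambda>x. sqrt (R\<^sup>2 - x\<^sup>2) - c) has_real_derivative (inverse (sqrt (R\<^sup>2 - x\<^sup>2)) / 2 * (- (2*x)) - 0)) (at x)"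
    by (rule DERIV_diff[OF _ DERIV_const])
  moreover have "inverse (sqrt (R\<^sup>2 - x\<^sup>2)) / 2 * (- (2*x)) - 0 = - x / sqrt (R\<^sup>2 - x\<^sup>2)"
    by (simp add: field_simps)
  ultimately show ?thesis by (rule DERIV_cong)
qed

lemma u0_props:
  fixes \<beta> R :: real
  assumes b: "0 < \<beta>" "\<beta> < 1" and R0: "0 < R"
  assumes s_def: "s = sqrt (1 - \<beta>\<^sup>2)"
  assumes p0_def: "p0 = s * R"
  assumes u0_def: "u0 = (\<lambda>x::real. sqrt (R\<^sup>2 - x\<^sup>2) - \<beta> * R)"
  assumes g0_def: "g0 = (\<lambda>x::real. - x / sqrt (R\<^sup>2 - x\<^sup>2))"
  shows "p0 > 0" "p0 < R" "W11_with_deriv p0 u0 g0" "\<forall>x\<in>{-p0..p0}. u0 x \<ge> 0" "u0 p0 = 0" "u0 (-p0) = 0"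
    "integral {-p0..p0} u0 = R\<^sup>2 * (arccos \<beta> - \<beta> * s)"
    "\<forall>x\<in>{-p0..p0}. sqrt (1 + (g0 x)\<^sup>2) - (sqrt (R\<^sup>2 - x\<^sup>2) - x * g0 x) / R = 0"
proof -
  have b2: "\<beta>\<^sup>2 < 1" using b by (simp add: power_less_one_iff)
  have s0: "0 < s" using b2 by (simp add: s_def)
  have s1: "s < 1" using b by (simp add: s_def)
  have ss: "s\<^sup>2 = 1 - \<beta>\<^sup>2" using b2 by (simp add: s_def)
  show p0: "p0 > 0" using s0 R0 by (simp add: p0_def)
  show Rp: "p0 < R" using s1 R0 by (simp add: p0_def mult_less_cancel_right1)
  have sqp: "sqrt (R\<^sup>2 - p0\<^sup>2) = R * \<beta>"
  proof -
    have "R\<^sup>2 - p0\<^sup>2 = R\<^sup>2 * (1 - s\<^sup>2)" unfolding p0_def by (simp add: power2_eq_square algebra_simps)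
    also have "\<dots> = (R * \<beta>)\<^sup>2" using ss by (simp add: power_mult_distrib)
    finally have "R\<^sup>2 - p0\<^sup>2 = (R * \<beta>)\<^sup>2" .
    then show ?thesis using R0 b by simp
  qed
  have asin: "arcsin (p0 / R) = arccos \<beta>"
    using b R0 by (simp add: arccos_arcsin_sqrt_pos s_def p0_def)
  have inR: "\<bar>x\<bar> < R" if "x \<in> {-p0..p0}" for x using that Rp by auto
  have der: "(u0 has_real_derivative g0 x) (at x)" if "x \<in> {-p0..p0}" for x
    unfolding u0_def g0_def by (rule u0_deriv[OF inR[OF that]])
  show "u0 p0 = 0" "u0 (-p0) = 0" using sqp by (simp_all add: u0_def)
  show "\<forall>x\<in>{-p0..p0}. u0 x \<ge> 0"
  proof
    fix x assume x: "x \<in> {-p0..p0}"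
    have "x\<^sup>2 \<le> p0\<^sup>2" using x by (simp add: abs_le_square_iff[symmetric] abs_le_iff)
    then have "sqrt (R\<^sup>2 - p0\<^sup>2) \<le> sqrt (R\<^sup>2 - x\<^sup>2)" by simp
    then show "u0 x \<ge> 0" using sqp by (simp add: u0_def mult.commute)
  qed
  have cont: "continuous_on {-p0..p0} g0"
  proof -
    have nz: "\<forall>x\<in>{-p0..p0}. sqrt (R\<^sup>2 - x\<^sup>2) \<noteq> 0"
    proof
      fix x assume "x \<in> {-p0..p0}"
      then have "0 < R\<^sup>2 - x\<^sup>2" using inR sq_lt by blast
      then show "sqrt (R\<^sup>2 - x\<^sup>2) \<noteq> 0" by simp
    qed
    have "continuous_on {-p0..p0} (\<lambda>x. - x / sqrt (R\<^sup>2 - x\<^sup>2))"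
      by (intro continuous_intros) (use nz in auto)
    then show ?thesis by (simp add: g0_def)
  qed
  show "W11_with_deriv p0 u0 g0"
    unfolding W11_with_deriv_def
  proof (intro conjI ballI)
    show "g0 absolutely_integrable_on {-p0..p0}" by (rule absolutely_integrable_continuous_real[OF cont])
    fix x assume x: "x \<in> {-p0..p0}"
    have "(g0 has_integral (u0 x - u0 (-p0))) {-p0..x}"
    proof (rule fundamental_theorem_of_calculus)
      show "-p0 \<le> x" using x by simp
      fix y assume "y \<in> {-p0..x}"
      then have "y \<in> {-p0..p0}" using x by auto
      then show "(u0 has_vector_derivative g0 y) (at y within {-p0..x})"
        using der by (simp add: has_real_derivative_iff_has_vector_derivative has_vector_derivative_at_within)
    qed
    then show "u0 x = u0 (-p0) + integral {-p0..x} g0" by (simp add: integral_unique)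
  qed
  have hI: "((\<lambda>x. sqrt (R\<^sup>2 - x\<^sup>2)) has_integral (p0 * sqrt (R\<^sup>2 - p0\<^sup>2) + R\<^sup>2 * arcsin (p0 / R))) {-p0..p0}"
    by (rule sqrt_integral[OF p0 Rp])
  have "(u0 has_integral ((p0 * sqrt (R\<^sup>2 - p0\<^sup>2) + R\<^sup>2 * arcsin (p0 / R)) - Henstock_Kurzweil_Integration.content {-p0..p0} *\<^sub>R (\<beta> * R))) {-p0..p0}"
    unfolding u0_def by (intro has_integral_diff hI has_integral_const_real)
  then have "integral {-p0..p0} u0 = p0 * (R * \<beta>) + R\<^sup>2 * arccos \<beta> - 2 * p0 * (\<beta> * R)"
    using p0 by (simp add: integral_unique sqp asin)
  also have "\<dots> = R\<^sup>2 * (arccos \<beta> - \<beta> * s)" by (simp add: p0_def power2_eq_square algebra_simps)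
  finally show "integral {-p0..p0} u0 = R\<^sup>2 * (arccos \<beta> - \<beta> * s)" .
  show "\<forall>x\<in>{-p0..p0}. sqrt (1 + (g0 x)\<^sup>2) - (sqrt (R\<^sup>2 - x\<^sup>2) - x * g0 x) / R = 0"
  proof
    fix x assume x: "x \<in> {-p0..p0}"
    define q where "q = sqrt (R\<^sup>2 - x\<^sup>2)"
    have pos: "0 < R\<^sup>2 - x\<^sup>2" using inR[OF x] sq_lt by blast
    have q0: "q > 0" using pos by (simp add: q_def)
    have q2: "q\<^sup>2 = R\<^sup>2 - x\<^sup>2" using pos by (simp add: q_def)
    have gx: "g0 x = - x / q" by (simp add: g0_def q_def)
    have "1 + (g0 x)\<^sup>2 = (R / q)\<^sup>2"
      using q0 q2 unfolding gx by (simp add: power_divide field_simps)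
    then have "sqrt (1 + (g0 x)\<^sup>2) = R / q" using q0 R0 by simp
    moreover have "(q - x * g0 x) / R = R / q"
      using q0 q2 R0 unfolding gx by (simp add: field_simps power2_eq_square)
    ultimately show "sqrt (1 + (g0 x)\<^sup>2) - (sqrt (R\<^sup>2 - x\<^sup>2) - x * g0 x) / R = 0"
      by (simp add: q_def)
  qed
qed


lemma smooth_step:
  fixes R e c :: real and q :: "real poly"
  assumes R0: "R > 0" and f: "\<forall>x. \<bar>x\<bar> < R \<longrightarrow> f x = poly q x * (R\<^sup>2 - x\<^sup>2) powr e + c"
    and x: "\<bar>x\<bar> < R"
  shows "(f has_real_derivative (poly (pderiv q * [:R\<^sup>2, 0, -1:] + smult (-2*e) ([:0,1:] * q)) x * (R\<^sup>2 - x\<^sup>2) powr (e - 1))) (at x)"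
proof -
  have pos: "0 < R\<^sup>2 - x\<^sup>2" using x by (rule sq_lt)
  have "((\<lambda>x. R\<^sup>2 - x\<^sup>2) has_real_derivative (- (2*x))) (at x)" by (auto intro!: derivative_eq_intros)
  from DERIV_chain2[OF has_real_derivative_powr[OF pos] this]
  have h1: "((\<lambda>y. (R\<^sup>2 - y\<^sup>2) powr e) has_real_derivative e * (R\<^sup>2 - x\<^sup>2) powr (e - 1) * (- (2*x))) (at x)" .
  have h2: "((\<lambda>y. poly q y * (R\<^sup>2 - y\<^sup>2) powr e + c) has_real_derivative
     (poly (pderiv q) x * (R\<^sup>2 - x\<^sup>2) powr e + e * (R\<^sup>2 - x\<^sup>2) powr (e - 1) * (- (2*x)) * poly q x + 0)) (at x)"
    by (rule DERIV_add[OF DERIV_mult[OF poly_DERIV h1] DERIV_const])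
  have pe: "(R\<^sup>2 - x\<^sup>2) powr e = (R\<^sup>2 - x\<^sup>2) * (R\<^sup>2 - x\<^sup>2) powr (e - 1)"
    using powr_mult_base[OF less_imp_le[OF pos], of "e - 1"] by simp
  have "poly (pderiv q) x * (R\<^sup>2 - x\<^sup>2) powr e + e * (R\<^sup>2 - x\<^sup>2) powr (e - 1) * (- (2*x)) * poly q x + 0
      = poly (pderiv q * [:R\<^sup>2, 0, -1:] + smult (-2*e) ([:0,1:] * q)) x * (R\<^sup>2 - x\<^sup>2) powr (e - 1)"
    unfolding pe by (simp add: algebra_simps power2_eq_square)
  with h2 have h3: "((\<lambda>y. poly q y * (R\<^sup>2 - y\<^sup>2) powr e + c) has_real_derivative
     (poly (pderiv q * [:R\<^sup>2, 0, -1:] + smult (-2*e) ([:0,1:] * q)) x * (R\<^sup>2 - x\<^sup>2) powr (e - 1))) (at x)"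
    by simp
  show ?thesis
  proof (rule has_field_derivative_transform_within_open[OF h3, of "ball 0 R"])
    show "open (ball (0::real) R)" by simp
    show "x \<in> ball 0 R" using x by simp
    fix y :: real assume "y \<in> ball 0 R"
    then have "\<bar>y\<bar> < R" by simp
    then show "poly q y * (R\<^sup>2 - y\<^sup>2) powr e + c = f y" using f by simp
  qed
qed

lemma smooth_all:
  fixes R \<beta> :: real
  assumes R0: "R > 0"
  defines "u0 \<equiv> (\<lambda>x::real. sqrt (R\<^sup>2 - x\<^sup>2) - \<beta> * R)"
  shows "\<forall>x. \<bar>x\<bar> < R \<longrightarrow> ((deriv ^^ n) u0) differentiable (at x)"
proof -
  have P: "\<exists>q e c. \<forall>x. \<bar>x\<bar> < R \<longrightarrow> (deriv ^^ n) u0 x = poly q x * (R\<^sup>2 - x\<^sup>2) powr e + c" for n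
  proof (induction n)
    case 0
    have "\<forall>x. \<bar>x\<bar> < R \<longrightarrow> (deriv ^^ 0) u0 x = poly [:1:] x * (R\<^sup>2 - x\<^sup>2) powr (1/2) + (- \<beta> * R)"
    proof (intro allI impI)
      fix x :: real assume "\<bar>x\<bar> < R"
      then have "0 < R\<^sup>2 - x\<^sup>2" by (rule sq_lt)
      then show "(deriv ^^ 0) u0 x = poly [:1:] x * (R\<^sup>2 - x\<^sup>2) powr (1/2) + (- \<beta> * R)"
        by (simp add: u0_def powr_half_sqrt)
    qed
    then show ?case by blast
  next
    case (Suc n)
    then obtain q e c where f: "\<forall>x. \<bar>x\<bar> < R \<longrightarrow> (deriv ^^ n) u0 x = poly q x * (R\<^sup>2 - x\<^sup>2) powr e + c" by blast
    have "\<forall>x. \<bar>x\<bar> < R \<longrightarrow> (deriv ^^ Suc n) u0 x = poly (pderiv q * [:R\<^sup>2, 0, -1:] + smult (-2*e) ([:0,1:] * q)) x * (R\<^sup>2 - x\<^sup>2) powr (e - 1) + 0"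
    proof (intro allI impI)
      fix x :: real assume x: "\<bar>x\<bar> < R"
      show "(deriv ^^ Suc n) u0 x = poly (pderiv q * [:R\<^sup>2, 0, -1:] + smult (-2*e) ([:0,1:] * q)) x * (R\<^sup>2 - x\<^sup>2) powr (e - 1) + 0"
        using DERIV_imp_deriv[OF smooth_step[OF R0 f x]] by simp
    qed
    then show ?case by blast
  qed
  show ?thesis
  proof (intro allI impI)
    fix x :: real assume x: "\<bar>x\<bar> < R"
    obtain q e c where f: "\<forall>x. \<bar>x\<bar> < R \<longrightarrow> (deriv ^^ n) u0 x = poly q x * (R\<^sup>2 - x\<^sup>2) powr e + c"
      using P by blast
    show "((deriv ^^ n) u0) differentiable (at x)"
      using smooth_step[OF R0 f x] unfolding real_differentiable_def by blast
  qed
qed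


theorem mainTheorem5:
  fixes \<beta> :: real
  assumes "0 < \<beta>" "\<beta> < 1"
  defines "R \<equiv> 1 / sqrt (arccos \<beta> - \<beta> * sqrt (1 - \<beta>^2))"
  defines "p0 \<equiv> sqrt (1 - \<beta>^2) * R"
  defines "u0 \<equiv> (\<lambda>x::real. sqrt (R^2 - x^2) - \<beta> * R)"
  shows "(\<exists>g0. admissible p0 u0 g0 \<and>
            (\<forall>p u g. admissible p u g \<longrightarrow> Jfun \<beta> p0 g0 \<le> Jfun \<beta> p g))
       \<and> (\<forall>p u g. admissible p u g \<and>
            (\<forall>p' u' g'. admissible p' u' g' \<longrightarrow> Jfun \<beta> p g \<le> Jfun \<beta> p' g')
            \<longrightarrow> p = p0 \<and> (\<forall>x\<in>{-p..p}. u x = u0 x))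
       \<and> (\<forall>n. \<forall>x\<in>{-p0..p0}. ((deriv ^^ n) u0) differentiable (at x))
       \<and> 1 / sqrt (1 + (deriv u0 p0)^2) = \<beta>
       \<and> 1 / sqrt (1 + (deriv u0 (-p0))^2) = \<beta>"
proof -
  define s where "s = sqrt (1 - \<beta>\<^sup>2)"
  define c where "c = arccos \<beta> - \<beta> * s"
  have b2: "\<beta>\<^sup>2 < 1" using assms by (simp add: power_less_one_iff)
  have s0: "0 < s" using b2 by (simp add: s_def)
  have ss: "s\<^sup>2 = 1 - \<beta>\<^sup>2" using b2 by (simp add: s_def)
  have c0: "c > 0" unfolding c_def s_def using c_pos[OF assms(1,2)] .
  have R_eq: "R = 1 / sqrt c" by (simp add: R_def c_def s_def)
  have R0: "R > 0" using c0 R_eq by simp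
  have Rc: "R\<^sup>2 * c = 1" using c0 R_eq by (simp add: power_divide)
  have p0_eq: "p0 = s * R" by (simp add: p0_def s_def)
  define g0 where "g0 = (\<lambda>x::real. - x / sqrt (R\<^sup>2 - x\<^sup>2))"
  note U = u0_props[OF assms(1,2) R0 s_def p0_eq meta_eq_to_obj_eq[OF u0_def] g0_def]
  have cRs: "arccos \<beta> - \<beta> * s = c" by (simp add: c_def)
  have adm0: "admissible p0 u0 g0"
    unfolding admissible_def using U Rc cRs by simp
  have Jg: "Jfun \<beta> p g = 1 / (p / s) + c * (p / s) + integral {-p..p} (\<lambda>x. sqrt (1 + (g x)\<^sup>2) - (sqrt ((p / s)\<^sup>2 - x\<^sup>2) - x * g x) / (p / s))"
    and Dint: "(\<lambda>x. sqrt (1 + (g x)\<^sup>2) - (sqrt ((p / s)\<^sup>2 - x\<^sup>2) - x * g x) / (p / s)) integrable_on {-p..p}"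
    and Dnn: "\<forall>x\<in>{-p..p}. 0 \<le> sqrt (1 + (g x)\<^sup>2) - (sqrt ((p / s)\<^sup>2 - x\<^sup>2) - x * g x) / (p / s)"
    if "admissible p u g" for p u g
    using key[OF assms(1,2) that, folded s_def] by (simp_all add: c_def mult.commute)
  have Rs: "p0 / s = R" using s0 p0_eq by simp
  have J0: "Jfun \<beta> p0 g0 = 2 * sqrt c"
  proof -
    have "integral {-p0..p0} (\<lambda>x. sqrt (1 + (g0 x)\<^sup>2) - (sqrt (R\<^sup>2 - x\<^sup>2) - x * g0 x) / R) = integral {-p0..p0} (\<lambda>x. 0)"
      by (rule integral_cong) (use U in simp)
    then have "Jfun \<beta> p0 g0 = 1 / R + c * R" using Jg[OF adm0] unfolding Rs by simp
    also have "\<dots> = 2 * sqrt c" using c0 unfolding R_eq by (simp add: field_simps real_sqrt_mult[symmetric])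
    finally show ?thesis .
  qed
  have lower: "2 * sqrt c \<le> Jfun \<beta> p g" if adm: "admissible p u g" for p u g
  proof -
    have p: "p > 0" using adm by (simp add: admissible_def)
    have "0 \<le> integral {-p..p} (\<lambda>x. sqrt (1 + (g x)\<^sup>2) - (sqrt ((p / s)\<^sup>2 - x\<^sup>2) - x * g x) / (p / s))"
      by (rule integral_nonneg[OF Dint[OF adm]]) (use Dnn[OF adm] in simp)
    moreover have "2 * sqrt c \<le> 1 / (p / s) + c * (p / s)" using amgm(1)[OF c0, of "p / s"] p s0 by simp
    ultimately show ?thesis using Jg[OF adm] by linarith
  qed
  have part1: "\<exists>g0. admissible p0 u0 g0 \<and> (\<forall>p u g. admissible p u g \<longrightarrow> Jfun \<beta> p0 g0 \<le> Jfun \<beta> p g)"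
    using adm0 J0 lower by metis
  have part2: "p = p0 \<and> (\<forall>x\<in>{-p..p}. u x = u0 x)"
    if adm: "admissible p u g" and mini: "\<forall>p' u' g'. admissible p' u' g' \<longrightarrow> Jfun \<beta> p g \<le> Jfun \<beta> p' g'" for p u g
  proof -
    have p: "p > 0" using adm by (simp add: admissible_def)
    define D where "D = (\<lambda>x. sqrt (1 + (g x)\<^sup>2) - (sqrt ((p / s)\<^sup>2 - x\<^sup>2) - x * g x) / (p / s))"
    have Jle: "Jfun \<beta> p g \<le> 2 * sqrt c" using mini adm0 J0 by metis
    have iD: "0 \<le> integral {-p..p} D"
      unfolding D_def by (rule integral_nonneg[OF Dint[OF adm]]) (use Dnn[OF adm] in simp)
    have am: "2 * sqrt c \<le> 1 / (p / s) + c * (p / s)" using amgm(1)[OF c0, of "p / s"] p s0 by simp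
    have JD: "Jfun \<beta> p g = 1 / (p / s) + c * (p / s) + integral {-p..p} D" using Jg[OF adm] by (simp add: D_def)
    have i0: "integral {-p..p} D = 0" using Jle iD am JD by linarith
    have "1 / (p / s) + c * (p / s) = 2 * sqrt c" using Jle iD am JD by linarith
    then have pR: "p / s = R" using amgm(2)[OF c0, of "p / s"] p s0 R_eq by simp
    have pp0: "p = p0" using pR s0 p0_eq by (simp add: field_simps)
    obtain N where N: "negligible N" "\<forall>x\<in>{-p..p} - N. D x = 0"
      using ae_zero[OF Dint[OF adm, folded D_def] _ i0] Dnn[OF adm] unfolding D_def by blast
    have geq: "g x = g0 x" if x: "x \<in> {-p..p} - N" for x
    proof -
      have "\<bar>x\<bar> < R" using x pp0 U(2) by auto
      then have pos: "0 < R\<^sup>2 - x\<^sup>2" by (rule sq_lt)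
      have ab: "(sqrt (R\<^sup>2 - x\<^sup>2) / R)\<^sup>2 + (- x / R)\<^sup>2 = 1"
        using pos R0 by (simp add: power_divide field_simps)
      have a0: "sqrt (R\<^sup>2 - x\<^sup>2) / R > 0" using pos R0 by simp
      have "D x = 0" using N x by blast
      then have "sqrt (R\<^sup>2 - x\<^sup>2) / R + - x / R * g x = sqrt (1 + (g x)\<^sup>2)"
        unfolding D_def pR by (simp add: diff_divide_distrib)
      from cs_eq[OF ab a0 this] have "g x = (- x / R) / (sqrt (R\<^sup>2 - x\<^sup>2) / R)" .
      also have "\<dots> = g0 x" using R0 by (simp add: g0_def)
      finally show ?thesis .
    qed
    have W: "\<forall>x\<in>{-p..p}. u x = u (-p) + integral {-p..x} g" "u (-p) = 0"
      using adm by (auto simp: admissible_def W11_with_deriv_def)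
    have W0: "\<forall>x\<in>{-p0..p0}. u0 x = u0 (-p0) + integral {-p0..x} g0" "u0 (-p0) = 0"
      using U by (auto simp: W11_with_deriv_def)
    have "u y = u0 y" if y: "y \<in> {-p..p}" for y
    proof -
      have "integral {-p..y} g = integral {-p..y} g0"
      proof (rule integral_spike[OF N(1)])
        fix x assume "x \<in> {-p..y} - N"
        then have "x \<in> {-p..p} - N" using y by auto
        then show "g0 x = g x" using geq by simp
      qed
      then show ?thesis using W W0 y pp0 by simp
    qed
    then show ?thesis using pp0 by blast
  qed
  have part3: "\<forall>n. \<forall>x\<in>{-p0..p0}. ((deriv ^^ n) u0) differentiable (at x)"
  proof (intro allI ballI)
    fix n x assume x: "x \<in> {-p0..p0}"
    then have "\<bar>x\<bar> < R" using U(2) by auto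
    then show "((deriv ^^ n) u0) differentiable (at x)"
      using smooth_all[OF R0, of n \<beta>] unfolding u0_def by blast
  qed
  have sqp: "sqrt (R\<^sup>2 - p0\<^sup>2) = R * \<beta>"
  proof -
    have "R\<^sup>2 - p0\<^sup>2 = R\<^sup>2 * (1 - s\<^sup>2)" unfolding p0_eq by (simp add: power2_eq_square algebra_simps)
    also have "\<dots> = (R * \<beta>)\<^sup>2" using ss by (simp add: power_mult_distrib)
    finally have "R\<^sup>2 - p0\<^sup>2 = (R * \<beta>)\<^sup>2" .
    then show ?thesis using R0 assms by simp
  qed
  have dp: "deriv u0 p0 = - p0 / sqrt (R\<^sup>2 - p0\<^sup>2)"
    using DERIV_imp_deriv[OF u0_deriv[of p0 R "\<beta> * R"]] U(1,2) unfolding u0_def by simp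
  have dm: "deriv u0 (-p0) = p0 / sqrt (R\<^sup>2 - p0\<^sup>2)"
    using DERIV_imp_deriv[OF u0_deriv[of "-p0" R "\<beta> * R"]] U(1,2) unfolding u0_def by simp
  have key_ang: "1 / sqrt (1 + (p0 / sqrt (R\<^sup>2 - p0\<^sup>2))\<^sup>2) = \<beta>"
  proof -
    have "p0 / sqrt (R\<^sup>2 - p0\<^sup>2) = p0 / (R * \<beta>)" by (simp only: sqp)
    also have "\<dots> = s / \<beta>" unfolding p0_eq using R0 by simp
    finally have "p0 / sqrt (R\<^sup>2 - p0\<^sup>2) = s / \<beta>" .
    moreover have "1 + (s / \<beta>)\<^sup>2 = (1 / \<beta>)\<^sup>2" using ss assms by (simp add: power_divide field_simps)
    ultimately show ?thesis using assms by simp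
  qed
  have part4: "1 / sqrt (1 + (deriv u0 p0)^2) = \<beta>" using key_ang dp by simp
  have part5: "1 / sqrt (1 + (deriv u0 (-p0))^2) = \<beta>" using key_ang dm by simp
  show ?thesis using part1 part2 part3 part4 part5 by blast
qed

end
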